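(* Let $Q_{\mathsf{matrix}}(A,C) :- R_1(A,B), R_2(B,C)$ and let $D=(R_1,R_2)$ be any database with $R_2=(\pi_B R_2)\times(\pi_C R_2)$. Then there is a solution to $\mathrm{SWP}(Q_{\mathsf{matrix}},D)$ that is integral, i.e. there is a sub-database $(R_1',R_2')$ with $R_1'\subseteq R_1$, $R_2'\subseteq R_2$, $R_2'=(\pi_B R_2')\times(\pi_C R_2)$, such that $Q_{\mathsf{matrix}}(R_1',R_2')=Q_{\mathsf{matrix}}(D)$ and $|R_1'|+|R_2'|$ is minimum among all sub-databases $D''\subseteq D$ with $Q_{\mathsf{matrix}}(D'')=Q_{\mathsf{matrix}}(D)$.
   Context: For a conjunctive query $Q$ and database $D$ (finite sets of tuples for its relations), $Q(D)$ is the projection onto the output attributes of the natural join of the relations. $\mathrm{SWP}(Q,D)$ asks for a subset $D'\subseteq D$ of tuples with $Q(D')=Q(D)$ and $|D'|$ minimum. $\pi$ denotes projection. *)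

theory Defs
  imports Main
begin

definition qmatrix :: "('a \<times> 'b) set \<Rightarrow> ('b \<times> 'c) set \<Rightarrow> ('a \<times> 'c) set" where
  "qmatrix R1 R2 = {(a, c). \<exists>b. (a, b) \<in> R1 \<and> (b, c) \<in> R2}"

definition projB :: "('b \<times> 'c) set \<Rightarrow> 'b set" where
  "projB R = fst ` R"

definition projC :: "('b \<times> 'c) set \<Rightarrow> 'c set" where
  "projC R = snd ` R"

end

theory Submission
  imports Defs
begin

theorem lemma21:
  fixes R1 :: "('a \<times> 'b) set" and R2 :: "('b \<times> 'c) set"
  assumes "finite R1" and "finite R2"
    and "R2 = projB R2 \<times> projC R2"
  shows "\<exists>R1' R2'. R1' \<subseteq> R1 \<and> R2' \<subseteq> R2
           \<and> R2' = projB R2' \<times> projC R2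
           \<and> qmatrix R1' R2' = qmatrix R1 R2
           \<and> (\<forall>S1 S2. S1 \<subseteq> R1 \<longrightarrow> S2 \<subseteq> R2 \<longrightarrow> qmatrix S1 S2 = qmatrix R1 R2
                \<longrightarrow> card R1' + card R2' \<le> card S1 + card S2)"
proof (cases "R2 = {}")
  case True
  show ?thesis
    by (rule exI[of _ "{}"], rule exI[of _ "{}"]) (auto simp: True qmatrix_def projB_def projC_def)
next
  case False
  define B where "B = projB R2"
  define C where "C = projC R2"
  have R2eq: "R2 = B \<times> C" using assms(3) B_def C_def by simp
  have Cne: "C \<noteq> {}" using False R2eq by auto
  have finB: "finite B" unfolding B_def projB_def using assms(2) by simp
  have finC: "finite C" unfolding C_def projC_def using assms(2) by simp
  define A0 where "A0 = {a. \<exists>b\<in>B. (a,b) \<in> R1}"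
  have finA0: "finite A0"
  proof -
    have "A0 \<subseteq> fst ` R1" unfolding A0_def by force
    thus ?thesis using assms(1) finite_subset by blast
  qed
  have Q: "qmatrix R1 R2 = A0 \<times> C" unfolding qmatrix_def A0_def R2eq by auto
  define P where "P X = (X \<subseteq> B \<and> (\<forall>a\<in>A0. \<exists>b\<in>X. (a,b) \<in> R1))" for X
  have PB: "P B" unfolding P_def A0_def by auto
  define B' where "B' = arg_min card P"
  have PB': "P B'" and minB': "\<And>X. P X \<Longrightarrow> card B' \<le> card X"
    using arg_min_nat_lemma[of P B card] PB unfolding B'_def by auto
  have B'B: "B' \<subseteq> B" and cov: "\<And>a. a \<in> A0 \<Longrightarrow> \<exists>b\<in>B'. (a,b) \<in> R1"
    using PB' unfolding P_def by auto
  define f where "f a = (SOME b. b \<in> B' \<and> (a,b) \<in> R1)" for a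
  have f: "\<And>a. a \<in> A0 \<Longrightarrow> f a \<in> B' \<and> (a, f a) \<in> R1"
    unfolding f_def using cov by (metis (no_types, lifting) someI_ex)
  define R1' where "R1' = (\<lambda>a. (a, f a)) ` A0"
  define R2' where "R2' = B' \<times> C"
  have s1: "R1' \<subseteq> R1" unfolding R1'_def using f by auto
  have s2: "R2' \<subseteq> R2" unfolding R2'_def R2eq using B'B by auto
  have pr: "projB R2' = B'" unfolding R2'_def projB_def using Cne by auto
  have rect: "R2' = projB R2' \<times> projC R2" using pr unfolding R2'_def C_def by simp
  have q': "qmatrix R1' R2' = qmatrix R1 R2"
    unfolding Q unfolding qmatrix_def R1'_def R2'_def using f by auto
  have c1: "card R1' = card A0" unfolding R1'_def
    by (rule card_image) (auto simp: inj_on_def)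
  have c2: "card R2' = card B' * card C" unfolding R2'_def by (simp add: card_cartesian_product)
  have opt: "card R1' + card R2' \<le> card S1 + card S2"
    if S1: "S1 \<subseteq> R1" and S2: "S2 \<subseteq> R2" and QS: "qmatrix S1 S2 = qmatrix R1 R2" for S1 S2
  proof -
    obtain c0 where c0: "c0 \<in> C" using Cne by auto
    have "A0 \<subseteq> fst ` S1"
    proof
      fix a assume "a \<in> A0"
      hence "(a,c0) \<in> qmatrix S1 S2" using QS Q c0 by auto
      then obtain b where "(a,b) \<in> S1" unfolding qmatrix_def by auto
      thus "a \<in> fst ` S1" by force
    qed
    hence "card A0 \<le> card S1"
      by (meson S1 assms(1) card_image_le card_mono finite_imageI finite_subset order_trans)
    moreover have "card B' * card C \<le> card S2"
    proof -
      define Bc where "Bc c = {b. (b,c) \<in> S2}" for c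
      have finS2: "finite S2" using S2 assms(2) finite_subset by blast
      have "S2 = (\<lambda>(c,b). (b,c)) ` Sigma C Bc"
        unfolding Bc_def using S2 R2eq by force
      moreover have "inj_on (\<lambda>(c,b). (b,c)) (Sigma C Bc)" by (auto simp: inj_on_def)
      ultimately have "card S2 = card (Sigma C Bc)" by (metis card_image)
      also have "\<dots> = (\<Sum>c\<in>C. card (Bc c))"
      proof (rule card_SigmaI[OF finC])
        show "\<forall>c\<in>C. finite (Bc c)"
        proof
          fix c assume "c \<in> C"
          have "Bc c \<subseteq> B" unfolding Bc_def using S2 R2eq by auto
          thus "finite (Bc c)" using finB finite_subset by blast
        qed
      qed
      finally have eq: "card S2 = (\<Sum>c\<in>C. card (Bc c))" .
      have "\<And>c. c \<in> C \<Longrightarrow> card B' \<le> card (Bc c)"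
      proof -
        fix c assume c: "c \<in> C"
        have "P (Bc c)" unfolding P_def
        proof
          show "Bc c \<subseteq> B" unfolding Bc_def using S2 R2eq by auto
          show "\<forall>a\<in>A0. \<exists>b\<in>Bc c. (a, b) \<in> R1"
          proof
            fix a assume "a \<in> A0"
            hence "(a,c) \<in> qmatrix S1 S2" using QS Q c by auto
            then obtain b where "(a,b) \<in> S1" "(b,c) \<in> S2" unfolding qmatrix_def by auto
            thus "\<exists>b\<in>Bc c. (a, b) \<in> R1" unfolding Bc_def using S1 by auto
          qed
        qed
        thus "card B' \<le> card (Bc c)" by (rule minB')
      qed
      hence "(\<Sum>c\<in>C. card B') \<le> (\<Sum>c\<in>C. card (Bc c))" by (rule sum_mono)
      thus ?thesis using eq by (simp add: mult.commute)
    qed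
    ultimately show ?thesis using c1 c2 by simp
  qed
  show ?thesis
    apply (rule exI[of _ R1'], rule exI[of _ R2'])
    using s1 s2 rect q' opt by blast
qed

end
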